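(* Let $t \ge 2$ and let $q$ be a prime power. There do not exist vertices $a_1, b_1, \dots, a_{t+2}, b_{t+2}$ of $G(t,q)$ (not necessarily distinct) such that $a_i b_j \in E(G(t,q))$ for all $1 \le i < j \le t+2$ and $a_i b_i \notin E(G(t,q))$ for all $i \in [t+2]$.
   Context: $PG(t,q)$ denotes the projective space of dimension $t$ over $\mathbb{F}_q$: its points are the equivalence classes of nonzero vectors in $\mathbb{F}_q^{t+1}$ under the relation identifying a vector with its nonzero scalar multiples. $G(t,q)$ is the graph (possibly with loops) with vertex set $PG(t,q)$ in which two (not necessarily distinct) vertices represented by $\mathbf{x}, \mathbf{y}$ are adjacent if and only if $\langle \mathbf{x}, \mathbf{y}\rangle = \sum_{i=1}^{t+1} x_i y_i = 0$; in particular there is a loop at $\mathbf{x}$ iff $\langle \mathbf{x},\mathbf{x}\rangle = 0$, and $a_ia_i$ being an edge means a loop. *)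

theory Defs
  imports Main
begin

text \<open>Vectors of F_q^(t+1) are functions nat => 'a supported on coordinates 0..t.
  The finite field F_q is a type of class {finite, field}; every finite field has prime
  power order and every prime power occurs, so quantifying over such types is quantifying
  over prime powers q.\<close>

definition vecs :: "nat \<Rightarrow> (nat \<Rightarrow> 'a::field) set" where
  "vecs t = {x. \<forall>i>t. x i = 0}"

definition ip :: "nat \<Rightarrow> (nat \<Rightarrow> 'a::field) \<Rightarrow> (nat \<Rightarrow> 'a) \<Rightarrow> 'a" where
  "ip t x y = (\<Sum>i\<le>t. x i * y i)"

definition proj_class :: "nat \<Rightarrow> (nat \<Rightarrow> 'a::field) \<Rightarrow> (nat \<Rightarrow> 'a) set" where
  "proj_class t x = {y. \<exists>c. c \<noteq> 0 \<and> y = (\<lambda>i. c * x i)}"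

definition PG :: "nat \<Rightarrow> ((nat \<Rightarrow> 'a::field) set) set" where
  "PG t = proj_class t ` (vecs t - {\<lambda>_. 0})"

text \<open>Adjacency in G(t,q) (loops allowed): representatives are orthogonal
  (well defined, independent of representatives).\<close>
definition G_adj :: "nat \<Rightarrow> (nat \<Rightarrow> 'a::field) set \<Rightarrow> (nat \<Rightarrow> 'a) set \<Rightarrow> bool" where
  "G_adj t P Q = (\<exists>x\<in>P. \<exists>y\<in>Q. ip t x y = 0)"

end

theory Submission
  imports Defs "HOL-Library.FuncSet"
begin

lemma ip_scale: "ip t (\<lambda>i. c * u i) (\<lambda>i. d * v i) = c * d * ip t u v"
  unfolding ip_def by (simp add: sum_distrib_left algebra_simps)

lemma G_adj_class: "G_adj t (proj_class t u) (proj_class t v) \<longleftrightarrow> ip t u v = 0"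
proof
  assume "G_adj t (proj_class t u) (proj_class t v)"
  then obtain c d where "c \<noteq> 0" "d \<noteq> 0" "ip t (\<lambda>i. c * u i) (\<lambda>i. d * v i) = 0"
    unfolding G_adj_def proj_class_def by blast
  then show "ip t u v = 0" by (simp add: ip_scale)
next
  assume "ip t u v = 0"
  moreover have "u \<in> proj_class t u" "v \<in> proj_class t v"
    unfolding proj_class_def by (auto intro!: exI[of _ 1])
  ultimately show "G_adj t (proj_class t u) (proj_class t v)"
    unfolding G_adj_def by blast
qed

lemma ip_lin: "ip t (\<lambda>k. \<Sum>i\<in>A. e i * x i k) y = (\<Sum>i\<in>A. e i * ip t (x i) y)"
  unfolding ip_def by (simp add: sum_distrib_left sum_distrib_right algebra_simps sum.swap[of _ A])

lemma indep:
  fixes x y :: "nat \<Rightarrow> nat \<Rightarrow> 'a::field"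
  assumes lo: "\<And>i j. 1 \<le> i \<Longrightarrow> i < j \<Longrightarrow> j \<le> n \<Longrightarrow> ip t (x i) (y j) = 0"
    and diag: "\<And>i. i \<in> {1..n} \<Longrightarrow> ip t (x i) (y i) \<noteq> 0"
    and z: "\<And>k. k \<le> t \<Longrightarrow> (\<Sum>i\<in>{1..n}. e i * x i k) = 0"
  shows "\<forall>i\<in>{1..n}. e i = 0"
proof (rule ccontr)
  assume nt: "\<not> (\<forall>i\<in>{1..n}. e i = 0)"
  define S where "S = {i\<in>{1..n}. e i \<noteq> 0}"
  have S: "finite S" "S \<noteq> {}" using nt unfolding S_def by auto
  define j where "j = Max S"
  have jS: "j \<in> S" using S Max_in j_def by blast
  have jmax: "\<And>i. i \<in> S \<Longrightarrow> i \<le> j" using S j_def by simp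
  have "ip t (\<lambda>k. \<Sum>i\<in>{1..n}. e i * x i k) (y j) = 0"
    unfolding ip_def using z by simp
  hence "(\<Sum>i\<in>{1..n}. e i * ip t (x i) (y j)) = 0" by (simp add: ip_lin)
  moreover have "(\<Sum>i\<in>{1..n}. e i * ip t (x i) (y j)) = e j * ip t (x j) (y j)"
  proof -
    have jn: "j \<in> {1..n}" using jS S_def by auto
    have "(\<Sum>i\<in>{1..n}. e i * ip t (x i) (y j)) = e j * ip t (x j) (y j) + (\<Sum>i\<in>{1..n}-{j}. e i * ip t (x i) (y j))"
      using jn by (simp add: sum.remove)
    moreover have "(\<Sum>i\<in>{1..n}-{j}. e i * ip t (x i) (y j)) = 0"
    proof (rule sum.neutral, rule ballI)
      fix i assume i: "i \<in> {1..n}-{j}"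
      show "e i * ip t (x i) (y j) = 0"
      proof (cases "i < j")
        case True then show ?thesis using lo[of i j] i jn by auto
      next
        case False
        then have "i \<notin> S" using jmax i by force
        then show ?thesis using i S_def by auto
      qed
    qed
    ultimately show ?thesis by simp
  qed
  moreover have "e j * ip t (x j) (y j) \<noteq> 0" using jS S_def diag by auto
  ultimately show False by simp
qed

lemma count_bound:
  fixes x y :: "nat \<Rightarrow> nat \<Rightarrow> 'a::{finite,field}"
  assumes lo: "\<And>i j. 1 \<le> i \<Longrightarrow> i < j \<Longrightarrow> j \<le> n \<Longrightarrow> ip t (x i) (y j) = 0"
    and diag: "\<And>i. i \<in> {1..n} \<Longrightarrow> ip t (x i) (y i) \<noteq> 0"
  shows "n \<le> t + 1"
proof -
  define f where "f c = restrict (\<lambda>k. \<Sum>i\<in>{1..n}. c i * x i k) {..t}" for c :: "nat \<Rightarrow> 'a"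
  have inj: "inj_on f (PiE {1..n} (\<lambda>_. UNIV))"
  proof (rule inj_onI)
    fix c d assume c: "c \<in> PiE {1..n} (\<lambda>_. UNIV)" and d: "d \<in> PiE {1..n} (\<lambda>_. UNIV)"
      and eq: "f c = f d"
    have "\<And>k. k \<le> t \<Longrightarrow> (\<Sum>i\<in>{1..n}. (c i - d i) * x i k) = 0"
    proof -
      fix k assume k: "k \<le> t"
      have "f c k = f d k" using eq by simp
      hence "(\<Sum>i\<in>{1..n}. c i * x i k) = (\<Sum>i\<in>{1..n}. d i * x i k)"
        using k unfolding f_def by simp
      thus "(\<Sum>i\<in>{1..n}. (c i - d i) * x i k) = 0"
        by (simp add: left_diff_distrib sum_subtractf)
    qed
    from indep[OF lo diag this] have "\<forall>i\<in>{1..n}. c i = d i" by auto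
    thus "c = d" using c d by (metis PiE_ext)
  qed
  have sub: "f ` PiE {1..n} (\<lambda>_. UNIV) \<subseteq> PiE {..t} (\<lambda>_. (UNIV :: 'a set))"
    unfolding f_def by (auto split: if_splits)
  have "card (PiE {1..n} (\<lambda>_. (UNIV :: 'a set))) \<le> card (PiE {..t} (\<lambda>_. (UNIV :: 'a set)))"
    by (rule card_inj_on_le[OF inj sub]) (simp add: finite_PiE)
  hence "card (UNIV::'a set) ^ n \<le> card (UNIV::'a set) ^ (t+1)"
    by (simp add: card_PiE)
  moreover have "1 < card (UNIV::'a set)"
  proof -
    have "{0, 1::'a} \<subseteq> UNIV" by simp
    hence "card {0, 1::'a} \<le> card (UNIV::'a set)" by (rule card_mono[rotated]) simp
    thus ?thesis by simp
  qed
  ultimately show ?thesis by (rule power_le_imp_le_exp[rotated])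
qed

theorem lemma2p2:
  fixes t :: nat
  assumes "t \<ge> 2"
  shows "\<not> (\<exists>(a :: nat \<Rightarrow> (nat \<Rightarrow> 'a::{finite,field}) set) b.
            (\<forall>i\<in>{1..t+2}. a i \<in> PG t \<and> b i \<in> PG t) \<and>
            (\<forall>i j. 1 \<le> i \<and> i < j \<and> j \<le> t + 2 \<longrightarrow> G_adj t (a i) (b j)) \<and>
            (\<forall>i\<in>{1..t+2}. \<not> G_adj t (a i) (b i)))"
proof
  assume "\<exists>(a :: nat \<Rightarrow> (nat \<Rightarrow> 'a::{finite,field}) set) b.
            (\<forall>i\<in>{1..t+2}. a i \<in> PG t \<and> b i \<in> PG t) \<and>
            (\<forall>i j. 1 \<le> i \<and> i < j \<and> j \<le> t + 2 \<longrightarrow> G_adj t (a i) (b j)) \<and>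
            (\<forall>i\<in>{1..t+2}. \<not> G_adj t (a i) (b i))"
  then obtain a b :: "nat \<Rightarrow> (nat \<Rightarrow> 'a) set" where
    pg: "\<forall>i\<in>{1..t+2}. a i \<in> PG t \<and> b i \<in> PG t" and
    adj: "\<forall>i j. 1 \<le> i \<and> i < j \<and> j \<le> t + 2 \<longrightarrow> G_adj t (a i) (b j)" and
    nadj: "\<forall>i\<in>{1..t+2}. \<not> G_adj t (a i) (b i)" by blast
  have "\<forall>i\<in>{1..t+2}. \<exists>u. a i = proj_class t u" using pg unfolding PG_def by blast
  then obtain x where x: "\<forall>i\<in>{1..t+2}. a i = proj_class t (x i)" by metis
  have "\<forall>i\<in>{1..t+2}. \<exists>u. b i = proj_class t u" using pg unfolding PG_def by blast
  then obtain y where y: "\<forall>i\<in>{1..t+2}. b i = proj_class t (y i)" by metis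
  have "t + 2 \<le> t + 1"
  proof (rule count_bound[of "t+2" t x y])
    fix i j
    assume h: "1 \<le> i" "i < j" "j \<le> t + 2"
    then have "G_adj t (a i) (b j)" using adj by blast
    moreover have "a i = proj_class t (x i)" "b j = proj_class t (y j)" using h x y by auto
    ultimately show "ip t (x i) (y j) = 0" using G_adj_class by metis
  next
    fix i assume h: "i \<in> {1..t+2}"
    then have "\<not> G_adj t (a i) (b i)" using nadj by blast
    moreover have "a i = proj_class t (x i)" "b i = proj_class t (y i)" using h x y by auto
    ultimately show "ip t (x i) (y i) \<noteq> 0" using G_adj_class by metis
  qed
  then show False by simp
qed

end
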